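(* Let $(X,d)$ be a quasi-pseudometric space and $\varphi:X\to\mathbb{R}\cup\{\infty\}$ a proper bounded below function. For $x\in X$ let $S(x)=\{y\in X:\varphi(y)+d(y,x)\le\varphi(x)\}$. The following statements are equivalent: (wEk) there exists $z\in X$ such that $\varphi(y)=\varphi(z)$ for all $y\in S(z)$; (Tak) if for every $x\in X$ with $\inf\varphi(X)<\varphi(x)$ there exists $y\in S(x)$ with $\varphi(y)<\varphi(x)$, then there exists $z\in X$ with $\varphi(z)=\inf\varphi(X)$; (Car) for every mapping $T:X\to X$ satisfying $Tx\in S(x)$ for all $x\in X$, there exists $z\in X$ with $\varphi(Tz)=\varphi(z)$.
   Context: A quasi-pseudometric on $X$ is $d:X\times X\to[0,\infty)$ with $d(x,x)=0$ and $d(x,z)\le d(x,y)+d(y,z)$ for all $x,y,z$ (symmetry not assumed). $\varphi$ is proper if $\varphi(x)<\infty$ for some $x$. *)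

theory Defs
  imports "HOL-Library.Extended_Real"
begin

definition quasi_pseudometric :: "'a set \<Rightarrow> ('a \<Rightarrow> 'a \<Rightarrow> real) \<Rightarrow> bool" where
  "quasi_pseudometric X d \<longleftrightarrow>
     (\<forall>x\<in>X. \<forall>y\<in>X. 0 \<le> d x y) \<and>
     (\<forall>x\<in>X. d x x = 0) \<and>
     (\<forall>x\<in>X. \<forall>y\<in>X. \<forall>z\<in>X. d x z \<le> d x y + d y z)"

definition Sset :: "'a set \<Rightarrow> ('a \<Rightarrow> 'a \<Rightarrow> real) \<Rightarrow> ('a \<Rightarrow> ereal) \<Rightarrow> 'a \<Rightarrow> 'a set" where
  "Sset X d \<phi> x = {y \<in> X. \<phi> y + ereal (d y x) \<le> \<phi> x}"

end

theory Submission
  imports Defs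
begin

theorem theorem3p8:
  fixes X :: "'a set" and d :: "'a \<Rightarrow> 'a \<Rightarrow> real" and \<phi> :: "'a \<Rightarrow> ereal"
  assumes qpm: "quasi_pseudometric X d"
    and proper: "\<exists>x\<in>X. \<phi> x < \<infinity>"
    and bdd_below: "\<exists>c::real. \<forall>x\<in>X. ereal c \<le> \<phi> x"
  shows "((\<exists>z\<in>X. \<forall>y\<in>Sset X d \<phi> z. \<phi> y = \<phi> z)
          \<longleftrightarrow>
          ((\<forall>x\<in>X. (INF u\<in>X. \<phi> u) < \<phi> x \<longrightarrow> (\<exists>y\<in>Sset X d \<phi> x. \<phi> y < \<phi> x))
             \<longrightarrow> (\<exists>z\<in>X. \<phi> z = (INF u\<in>X. \<phi> u))))
       \<and>
       (((\<forall>x\<in>X. (INF u\<in>X. \<phi> u) < \<phi> x \<longrightarrow> (\<exists>y\<in>Sset X d \<phi> x. \<phi> y < \<phi> x))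
             \<longrightarrow> (\<exists>z\<in>X. \<phi> z = (INF u\<in>X. \<phi> u)))
          \<longleftrightarrow>
          (\<forall>T. (\<forall>x\<in>X. T x \<in> Sset X d \<phi> x) \<longrightarrow> (\<exists>z\<in>X. \<phi> (T z) = \<phi> z)))"
proof -
  let ?m = "(INF u\<in>X. \<phi> u)"
  let ?A = "\<exists>z\<in>X. \<forall>y\<in>Sset X d \<phi> z. \<phi> y = \<phi> z"
  let ?B = "(\<forall>x\<in>X. ?m < \<phi> x \<longrightarrow> (\<exists>y\<in>Sset X d \<phi> x. \<phi> y < \<phi> x)) \<longrightarrow> (\<exists>z\<in>X. \<phi> z = ?m)"
  let ?C = "\<forall>T. (\<forall>x\<in>X. T x \<in> Sset X d \<phi> x) \<longrightarrow> (\<exists>z\<in>X. \<phi> (T z) = \<phi> z)"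
  have le: "\<phi> y \<le> \<phi> z" if "y \<in> Sset X d \<phi> z" "z \<in> X" for y z
  proof -
    have y: "y \<in> X" "\<phi> y + ereal (d y z) \<le> \<phi> z" using that unfolding Sset_def by auto
    have "0 \<le> d y z" using qpm y(1) that(2) unfolding quasi_pseudometric_def by auto
    hence "\<phi> y \<le> \<phi> y + ereal (d y z)"
      by (metis add.right_neutral add_left_mono zero_ereal_def ereal_less_eq(3))
    thus ?thesis using y(2) by simp
  qed
  have inS: "y \<in> Sset X d \<phi> z \<Longrightarrow> y \<in> X" for y z unfolding Sset_def by auto
  have mle: "x \<in> X \<Longrightarrow> ?m \<le> \<phi> x" for x by (rule INF_lower)
  have AB: "?A \<longleftrightarrow> ?B"
  proof
    assume ?A
    then obtain z where z: "z \<in> X" "\<forall>y\<in>Sset X d \<phi> z. \<phi> y = \<phi> z" by blast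
    show ?B
    proof
      assume h: "\<forall>x\<in>X. ?m < \<phi> x \<longrightarrow> (\<exists>y\<in>Sset X d \<phi> x. \<phi> y < \<phi> x)"
      have "\<not> ?m < \<phi> z" using h z by fastforce
      hence "\<phi> z = ?m" using mle[OF z(1)] by simp
      thus "\<exists>z\<in>X. \<phi> z = ?m" using z by blast
    qed
  next
    assume B: ?B
    show ?A
    proof (rule ccontr)
      assume "\<not> ?A"
      hence nA: "\<forall>z\<in>X. \<exists>y\<in>Sset X d \<phi> z. \<phi> y < \<phi> z"
        using le by (metis order_le_less)
      then obtain z where z: "z \<in> X" "\<phi> z = ?m" using B by blast
      then obtain y where "y \<in> Sset X d \<phi> z" "\<phi> y < \<phi> z" using nA by blast
      thus False using mle[of y] inS z by fastforce
    qed
  qed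
  have AC: "?A \<longleftrightarrow> ?C"
  proof
    assume ?A
    then obtain z where z: "z \<in> X" "\<forall>y\<in>Sset X d \<phi> z. \<phi> y = \<phi> z" by blast
    show ?C using z by blast
  next
    assume C: ?C
    show ?A
    proof (rule ccontr)
      assume "\<not> ?A"
      hence nA: "\<forall>z\<in>X. \<exists>y\<in>Sset X d \<phi> z. \<phi> y \<noteq> \<phi> z" by blast
      define T where "T = (\<lambda>z. SOME y. y \<in> Sset X d \<phi> z \<and> \<phi> y \<noteq> \<phi> z)"
      have T: "\<forall>z\<in>X. T z \<in> Sset X d \<phi> z \<and> \<phi> (T z) \<noteq> \<phi> z"
        unfolding T_def using nA by (metis (mono_tags, lifting) someI_ex)
      then show False using C by blast
    qed
  qed
  show ?thesis using AB AC by blast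
qed

end
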